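(* Let $f\colon \mathbb{R}^n \times \mathbb{R}^p \to \overline{\mathbb{R}}$ be a proper nearly convex function, let $m(x)=\inf\{f(x,y)\mid y\in\mathbb{R}^p\}$, and suppose $m$ is finite at $\bar x \in \mathbb{R}^n$. For $\eta>0$ let $S_\eta(\bar x)=\{y\in\mathbb{R}^p\mid f(\bar x,y)\le m(\bar x)+\eta\}$, and let $S(\bar x)=\{y\in\mathbb{R}^p\mid m(\bar x)=f(\bar x,y)\}$. Then for every $\varepsilon \ge 0$, $$\partial_\varepsilon m(\bar x) = \bigcap_{\eta >0}\ \bigcap_{y \in S_\eta (\bar x)} \big\{\xi \in \mathbb{R}^n \mid (\xi,0) \in \partial_{\varepsilon +\eta} f (\bar x, y) \big\} =\bigcap_{\eta >0}\ \bigcup_{y \in \mathbb{R}^p} \big\{\xi \in \mathbb{R}^n \mid (\xi,0) \in \partial_{\varepsilon +\eta} f (\bar x, y) \big\}.$$ In particular, $$\partial m(\bar x) = \bigcap_{\eta >0}\ \bigcap_{y \in S_\eta (\bar x)} \big\{\xi \in \mathbb{R}^n \mid (\xi,0) \in \partial_{\eta} f (\bar x, y) \big\} =\bigcap_{\eta >0}\ \bigcup_{y \in \mathbb{R}^p} \big\{\xi \in \mathbb{R}^n \mid (\xi,0) \in \partial_{\eta} f (\bar x, y) \big\}.$$ In addition, if $S(\bar x)\neq \emptyset$, then for every $\varepsilon \ge 0$ and all $y \in S(\bar x)$, $$\partial_\varepsilon m(\bar x) = \big\{\xi \in \mathbb{R}^n \mid (\xi,0) \in \partial_{\varepsilon}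 f (\bar x, y) \big\}.$$
   Context: $\overline{\mathbb{R}}=[-\infty,\infty]$; proper means nonempty domain and never $-\infty$. A set $D$ is nearly convex if there is a convex $E$ with $E\subset D\subset\overline{E}$; a function is nearly convex if its epigraph is nearly convex. For a function $\psi$ on $\mathbb{R}^k$, $\varepsilon\ge0$ and $\bar z$ with $\psi(\bar z)$ finite, $\partial_\varepsilon\psi(\bar z)=\{\zeta\in\mathbb{R}^k\mid\langle\zeta,z-\bar z\rangle-\varepsilon\le\psi(z)-\psi(\bar z)\ \forall z\in\mathbb{R}^k\}$, and $\partial\psi=\partial_0\psi$. *)

theory Defs
  imports "HOL-Analysis.Analysis" "HOL-Library.Extended_Real"
begin

definition proper_fun :: "('a \<Rightarrow> ereal) \<Rightarrow> bool" where
  "proper_fun f \<longleftrightarrow> (\<exists>z. f z < \<infinity>) \<and> (\<forall>z. f z \<noteq> -\<infinity>)"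

definition epigraph :: "('a \<Rightarrow> ereal) \<Rightarrow> ('a \<times> real) set" where
  "epigraph f = {(z, t). f z \<le> ereal t}"

definition nearly_convex_set :: "'a::real_normed_vector set \<Rightarrow> bool" where
  "nearly_convex_set D \<longleftrightarrow> (\<exists>E. convex E \<and> E \<subseteq> D \<and> D \<subseteq> closure E)"

definition nearly_convex_fun :: "('a::real_normed_vector \<Rightarrow> ereal) \<Rightarrow> bool" where
  "nearly_convex_fun f \<longleftrightarrow> nearly_convex_set (epigraph f)"

definition eps_subdiff :: "('a::real_inner \<Rightarrow> ereal) \<Rightarrow> real \<Rightarrow> 'a \<Rightarrow> 'a set" where
  "eps_subdiff \<psi> \<epsilon> zb = {\<zeta>. \<bar>\<psi> zb\<bar> \<noteq> \<infinity> \<and>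
      (\<forall>z. ereal (inner \<zeta> (z - zb) - \<epsilon>) \<le> \<psi> z - \<psi> zb)}"

abbreviation subdiff :: "('a::real_inner \<Rightarrow> ereal) \<Rightarrow> 'a \<Rightarrow> 'a set" where
  "subdiff \<psi> zb \<equiv> eps_subdiff \<psi> 0 zb"

definition marginal :: "('a \<times> 'b \<Rightarrow> ereal) \<Rightarrow> 'a \<Rightarrow> ereal" where
  "marginal f x = (INF y. f (x, y))"

end

theory Submission
  imports Defs
begin

lemma le_minus_ereal_iff: "ereal r \<le> A - ereal c \<longleftrightarrow> ereal (r + c) \<le> A"
  by (cases A) auto

lemma le_eps_ereal:
  assumes "\<And>\<eta>::real. \<eta> > 0 \<Longrightarrow> ereal (a - \<eta>) \<le> F"
  shows "ereal a \<le> F"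
proof (cases F)
  case (real b)
  have "a \<le> b"
  proof (rule ccontr)
    assume "\<not> a \<le> b"
    then have "ereal (a - (a - b)/2) \<le> F" using assms[of "(a-b)/2"] by auto
    then show False using real \<open>\<not> a \<le> b\<close> by (auto simp: field_simps)
  qed
  then show ?thesis using real by auto
next
  case PInf then show ?thesis by auto
next
  case MInf then show ?thesis using assms[of 1] by auto
qed

lemma inner_pair0: "inner (\<xi>, 0::'b::real_inner) ((x, y') - (xb, y)) = inner \<xi> (x - xb)"
  by (simp add: inner_Pair)

lemma L1:
  assumes "marginal f xb = ereal M"
  shows "\<xi> \<in> eps_subdiff (marginal f) \<epsilon> xb \<longleftrightarrow>
     (\<forall>x y'. ereal (inner \<xi> (x - xb) - \<epsilon> + M) \<le> f (x, y'))"
proof -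
  have "\<xi> \<in> eps_subdiff (marginal f) \<epsilon> xb \<longleftrightarrow>
     (\<forall>x. ereal (inner \<xi> (x - xb) - \<epsilon> + M) \<le> marginal f x)"
    unfolding eps_subdiff_def using assms by (simp add: le_minus_ereal_iff)
  also have "\<dots> \<longleftrightarrow> (\<forall>x y'. ereal (inner \<xi> (x - xb) - \<epsilon> + M) \<le> f (x, y'))"
    unfolding marginal_def by (meson INF_greatest INF_lower UNIV_I order_trans)
  finally show ?thesis .
qed

lemma L2:
  fixes f :: "('a::real_inner) \<times> ('b::real_inner) \<Rightarrow> ereal"
  shows "(\<xi>, 0) \<in> eps_subdiff f \<delta> (xb, y) \<longleftrightarrow> \<bar>f (xb, y)\<bar> \<noteq> \<infinity> \<and>
     (\<forall>x y'. ereal (inner \<xi> (x - xb) - \<delta> + real_of_ereal (f (xb, y))) \<le> f (x, y'))"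
proof (cases "\<bar>f (xb, y)\<bar> \<noteq> \<infinity>")
  case True
  then obtain c where c: "f (xb, y) = ereal c" by (cases "f (xb, y)") auto
  show ?thesis unfolding eps_subdiff_def
    by (auto simp: c le_minus_ereal_iff inner_pair0)
next
  case False then show ?thesis unfolding eps_subdiff_def by auto
qed

theorem mainTheorem10:
  fixes f :: "(real^'n) \<times> (real^'p) \<Rightarrow> ereal"
    and xb :: "real^'n"
  assumes "proper_fun f" and "nearly_convex_fun f"
    and "\<bar>marginal f xb\<bar> \<noteq> \<infinity>"
  defines "S_eta \<equiv> \<lambda>\<eta>::real. {y. f (xb, y) \<le> marginal f xb + ereal \<eta>}"
    and "S \<equiv> {y. marginal f xb = f (xb, y)}"
  shows "(\<forall>\<epsilon>\<ge>0.
      eps_subdiff (marginal f) \<epsilon> xb =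
        (\<Inter>\<eta>\<in>{0<..}. \<Inter>y\<in>S_eta \<eta>. {\<xi>. (\<xi>, 0) \<in> eps_subdiff f (\<epsilon> + \<eta>) (xb, y)})
    \<and> eps_subdiff (marginal f) \<epsilon> xb =
        (\<Inter>\<eta>\<in>{0<..}. \<Union>y. {\<xi>. (\<xi>, 0) \<in> eps_subdiff f (\<epsilon> + \<eta>) (xb, y)}))
    \<and> (subdiff (marginal f) xb =
        (\<Inter>\<eta>\<in>{0<..}. \<Inter>y\<in>S_eta \<eta>. {\<xi>. (\<xi>, 0) \<in> eps_subdiff f \<eta> (xb, y)})
    \<and> subdiff (marginal f) xb =
        (\<Inter>\<eta>\<in>{0<..}. \<Union>y. {\<xi>. (\<xi>, 0) \<in> eps_subdiff f \<eta> (xb, y)}))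
    \<and> (S \<noteq> {} \<longrightarrow> (\<forall>\<epsilon>\<ge>0. \<forall>y\<in>S.
        eps_subdiff (marginal f) \<epsilon> xb = {\<xi>. (\<xi>, 0) \<in> eps_subdiff f \<epsilon> (xb, y)}))"
proof -
  obtain M where M: "marginal f xb = ereal M" using assms(3) by (cases "marginal f xb") auto
  have nm: "\<And>z. f z \<noteq> -\<infinity>" using assms(1) unfolding proper_fun_def by auto
  have lowb: "\<And>y. ereal M \<le> f (xb, y)" using M unfolding marginal_def by (metis INF_lower UNIV_I)
  have ne: "\<exists>y. f (xb, y) < ereal (M + \<eta>)" if "\<eta> > 0" for \<eta>
  proof -
    have "(INF y. f (xb, y)) < ereal (M + \<eta>)" using M that unfolding marginal_def by simp
    then show ?thesis by (simp add: INF_less_iff)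
  qed
  have A: "eps_subdiff (marginal f) \<epsilon> xb =
        (\<Inter>\<eta>\<in>{0<..}. \<Inter>y\<in>S_eta \<eta>. {\<xi>. (\<xi>, 0) \<in> eps_subdiff f (\<epsilon> + \<eta>) (xb, y)})
    \<and> eps_subdiff (marginal f) \<epsilon> xb =
        (\<Inter>\<eta>\<in>{0<..}. \<Union>y. {\<xi>. (\<xi>, 0) \<in> eps_subdiff f (\<epsilon> + \<eta>) (xb, y)})" for \<epsilon>
  proof -
    have s1: "eps_subdiff (marginal f) \<epsilon> xb \<subseteq>
        (\<Inter>\<eta>\<in>{0<..}. \<Inter>y\<in>S_eta \<eta>. {\<xi>. (\<xi>, 0) \<in> eps_subdiff f (\<epsilon> + \<eta>) (xb, y)})"
    proof (intro subsetI INT_I CollectI)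
      fix \<xi> y and \<eta> :: real assume xi: "\<xi> \<in> eps_subdiff (marginal f) \<epsilon> xb" and "\<eta> \<in> {0<..}" and y: "y \<in> S_eta \<eta>"
      have fy: "f (xb, y) \<le> ereal (M + \<eta>)" using y M unfolding S_eta_def by simp
      obtain c where c: "f (xb, y) = ereal c" using fy nm[of "(xb,y)"] by (cases "f (xb, y)") auto
      have cM: "c \<le> M + \<eta>" using fy c by simp
      show "(\<xi>, 0) \<in> eps_subdiff f (\<epsilon> + \<eta>) (xb, y)"
        unfolding L2 
      proof (simp add: c, intro allI)
        fix x y'
        have "ereal (inner \<xi> (x - xb) - \<epsilon> + M) \<le> f (x, y')" using xi L1[OF M] by blast
        moreover have "ereal (inner \<xi> (x - xb) - (\<epsilon> + \<eta>) + c) \<le> ereal (inner \<xi> (x - xb) - \<epsilon> + M)" using cM by simp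
        ultimately show "ereal (inner \<xi> (x - xb) - (\<epsilon> + \<eta>) + c) \<le> f (x, y')"
          by (rule order_trans[rotated])
      qed
    qed
    have s2: "(\<Inter>\<eta>\<in>{0<..}. \<Inter>y\<in>S_eta \<eta>. {\<xi>. (\<xi>, 0) \<in> eps_subdiff f (\<epsilon> + \<eta>) (xb, y)})
       \<subseteq> (\<Inter>\<eta>\<in>{0<..}. \<Union>y. {\<xi>. (\<xi>, 0) \<in> eps_subdiff f (\<epsilon> + \<eta>) (xb, y)})"
    proof (intro subsetI INT_I)
      fix \<xi> and \<eta> :: real assume h0: "\<xi> \<in> (\<Inter>\<eta>\<in>{0<..}. \<Inter>y\<in>S_eta \<eta>. {\<xi>. (\<xi>, 0) \<in> eps_subdiff f (\<epsilon> + \<eta>) (xb, y)})"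
        and "\<eta> \<in> {0<..}"
      then have "0 < \<eta>" by simp
      obtain y where fy: "f (xb, y) < ereal (M + \<eta>)" using ne \<open>0 < \<eta>\<close> by blast
      have yS: "y \<in> S_eta \<eta>" unfolding S_eta_def mem_Collect_eq M using fy by simp
      have "\<xi> \<in> {\<xi>. (\<xi>, 0) \<in> eps_subdiff f (\<epsilon> + \<eta>) (xb, y)}"
        using INT_D[OF INT_D[OF h0 \<open>\<eta> \<in> {0<..}\<close>] yS] .
      then have "(\<xi>, 0) \<in> eps_subdiff f (\<epsilon> + \<eta>) (xb, y)" by simp
      then show "\<xi> \<in> (\<Union>y. {\<xi>. (\<xi>, 0) \<in> eps_subdiff f (\<epsilon> + \<eta>) (xb, y)})" by (intro UN_I[OF UNIV_I]) simp
    qed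
    have s3: "(\<Inter>\<eta>\<in>{0<..}. \<Union>y. {\<xi>. (\<xi>, 0) \<in> eps_subdiff f (\<epsilon> + \<eta>) (xb, y)})
       \<subseteq> eps_subdiff (marginal f) \<epsilon> xb"
    proof (intro subsetI)
      fix \<xi> assume h0: "\<xi> \<in> (\<Inter>\<eta>\<in>{0<..}. \<Union>y. {\<xi>. (\<xi>, 0) \<in> eps_subdiff f (\<epsilon> + \<eta>) (xb, y)})"
      have h: "\<exists>y. (\<xi>, 0) \<in> eps_subdiff f (\<epsilon> + \<eta>) (xb, y)" if "\<eta> > 0" for \<eta>
      proof -
        have "\<xi> \<in> (\<Union>y. {\<xi>. (\<xi>, 0) \<in> eps_subdiff f (\<epsilon> + \<eta>) (xb, y)})"
          using INT_D[OF h0] that by simp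
        then show ?thesis by simp
      qed
      show "\<xi> \<in> eps_subdiff (marginal f) \<epsilon> xb"
        unfolding L1[OF M]
      proof (intro allI)
        fix x y'
        show "ereal (inner \<xi> (x - xb) - \<epsilon> + M) \<le> f (x, y')"
        proof (rule le_eps_ereal)
          fix \<eta> :: real assume "\<eta> > 0"
          then obtain y where "(\<xi>, 0) \<in> eps_subdiff f (\<epsilon> + \<eta>) (xb, y)" using h by blast
          then have fin: "\<bar>f (xb, y)\<bar> \<noteq> \<infinity>" and
            le: "ereal (inner \<xi> (x - xb) - (\<epsilon> + \<eta>) + real_of_ereal (f (xb, y))) \<le> f (x, y')"
            unfolding L2 by auto
          have "M \<le> real_of_ereal (f (xb, y))" using lowb[of y] fin
            by (cases "f (xb, y)") auto
          then have "ereal (inner \<xi> (x - xb) - \<epsilon> + M - \<eta>) \<le> ereal (inner \<xi> (x - xb) - (\<epsilon> + \<eta>) + real_of_ereal (f (xb, y)))"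
            by simp
          then show "ereal (inner \<xi> (x - xb) - \<epsilon> + M - \<eta>) \<le> f (x, y')"
            using le by (rule order_trans)
        qed
      qed
    qed
    show ?thesis
      by (rule conjI[OF subset_antisym[OF s1 order_trans[OF s2 s3]] subset_antisym[OF order_trans[OF s1 s2] s3]])
  qed
  have B: "eps_subdiff (marginal f) \<epsilon> xb = {\<xi>. (\<xi>, 0) \<in> eps_subdiff f \<epsilon> (xb, y)}"
    if "y \<in> S" for \<epsilon> y
  proof -
    have fy: "f (xb, y) = ereal M" using that M unfolding S_def by simp
    have "\<xi> \<in> eps_subdiff (marginal f) \<epsilon> xb \<longleftrightarrow> (\<xi>, 0) \<in> eps_subdiff f \<epsilon> (xb, y)" for \<xi>
      unfolding L1[OF M] L2 fy by simp
    then show ?thesis by blast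
  qed
  have A0: "subdiff (marginal f) xb =
        (\<Inter>\<eta>\<in>{0<..}. \<Inter>y\<in>S_eta \<eta>. {\<xi>. (\<xi>, 0) \<in> eps_subdiff f \<eta> (xb, y)})
    \<and> subdiff (marginal f) xb =
        (\<Inter>\<eta>\<in>{0<..}. \<Union>y. {\<xi>. (\<xi>, 0) \<in> eps_subdiff f \<eta> (xb, y)})"
    using A[of 0, unfolded add_0_left] .
  show ?thesis
    apply (intro conjI allI impI ballI)
    using A apply (rule conjunct1)
    using A apply (rule conjunct2)
    using A0 apply (rule conjunct1)
    using A0 apply (rule conjunct2)
    using B apply assumption
    done
qed

end
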